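(* Under the setting below, suppose additionally that $\underline y\le Y(a_{1:t})\le\overline y$ almost surely. If $\mathbb{P}(A_{1:t}=a_{1:t}\mid X_{0:N}(A_{1:N})\in B_{0:N})>\mathbb{P}(A_{1:t}=a_{1:t})$, then $$\mathbb{E}[\overline Y]-\mathbb{E}[\underline Y]>\mathbb{E}[\overline Y\mid X_{0:N}(A_{1:N})\in B_{0:N}]-\mathbb{E}[\underline Y\mid X_{0:N}(A_{1:N})\in B_{0:N}].$$
   Context: Horizon $T\ge1$, $\mathcal{X}_t=\mathbb{R}^{d_t}$, finite action spaces $\mathcal{A}_t$; potential outcomes $X_0$, $X_t(a_{1:t})\in\mathcal{X}_t$, random actions $A_{1:T}$, and real-valued potential outcomes $Y(a_{1:t})$ defined jointly; $X_{0:t}(a_{1:t})=(X_0,X_1(a_1),\dots,X_t(a_{1:t}))$. Fixed $t\in\{1,\dots,T\}$, $a_{1:t}\in\mathcal{A}_{1:t}$, measurable $B_{0:t}=B_0\times\cdots\times B_t$ with $\mathbb{P}(X_{0:t}(a_{1:t})\in B_{0:t})>0$, and $\underline y,\overline y\in\mathbb{R}$. $N=\max\{0\le s\le t:A_{1:s}=a_{1:s}\}$; $\underline Y=\mathbb{1}(A_{1:t}=a_{1:t})Y(A_{1:t})+\mathbb{1}(A_{1:t}\ne a_{1:t})\underline y$ and $\overline Y$ likewise with $\overline y$. Quantities evaluated at random actions denote the potential outcome indexed by the realized actions. *)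

theory Defs
  imports "HOL-Probability.Probability"
begin

definition act_hist :: "(nat \<Rightarrow> 'w \<Rightarrow> 'a) \<Rightarrow> nat \<Rightarrow> 'w \<Rightarrow> 'a list" where
  "act_hist A s \<omega> = map (\<lambda>i. A i \<omega>) [1..<Suc s]"

definition match_len :: "(nat \<Rightarrow> 'w \<Rightarrow> 'a) \<Rightarrow> 'a list \<Rightarrow> 'w \<Rightarrow> nat" where
  "match_len A a \<omega> = Max {s. s \<le> length a \<and> act_hist A s \<omega> = take s a}"

definition hist_event ::
  "'w measure \<Rightarrow> (nat \<Rightarrow> 'a list \<Rightarrow> 'w \<Rightarrow> 'x) \<Rightarrow> (nat \<Rightarrow> 'w \<Rightarrow> 'a) \<Rightarrow> 'a list \<Rightarrow> (nat \<Rightarrow> 'x set) \<Rightarrow> 'w set" where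
  "hist_event M X A a B = {\<omega> \<in> space M. \<forall>s \<le> match_len A a \<omega>. X s (act_hist A s \<omega>) \<omega> \<in> B s}"

definition fixed_event ::
  "'w measure \<Rightarrow> (nat \<Rightarrow> 'a list \<Rightarrow> 'w \<Rightarrow> 'x) \<Rightarrow> 'a list \<Rightarrow> (nat \<Rightarrow> 'x set) \<Rightarrow> 'w set" where
  "fixed_event M X a B = {\<omega> \<in> space M. \<forall>s \<le> length a. X s (take s a) \<omega> \<in> B s}"

definition clipped_Y :: "('a list \<Rightarrow> 'w \<Rightarrow> real) \<Rightarrow> (nat \<Rightarrow> 'w \<Rightarrow> 'a) \<Rightarrow> 'a list \<Rightarrow> real \<Rightarrow> 'w \<Rightarrow> real" where
  "clipped_Y Y A a c \<omega> =
     (if act_hist A (length a) \<omega> = a then Y (act_hist A (length a) \<omega>) \<omega> else c)"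

definition cprob :: "'w measure \<Rightarrow> 'w set \<Rightarrow> 'w set \<Rightarrow> real" where
  "cprob M F E = measure M (F \<inter> E) / measure M E"

definition cexp :: "'w measure \<Rightarrow> ('w \<Rightarrow> real) \<Rightarrow> 'w set \<Rightarrow> real" where
  "cexp M Z E = (\<integral>\<omega>. indicator E \<omega> * Z \<omega> \<partial>M) / measure M E"

end

theory Submission
  imports Defs
begin

theorem proposition4p5:
  fixes M :: "'w measure"
    and T t :: nat
    and d :: "nat \<Rightarrow> nat"
    and Act :: "nat \<Rightarrow> 'a set"
    and X :: "nat \<Rightarrow> 'a list \<Rightarrow> 'w \<Rightarrow> (nat \<Rightarrow> real)"
    and A :: "nat \<Rightarrow> 'w \<Rightarrow> 'a"
    and Y :: "'a list \<Rightarrow> 'w \<Rightarrow> real"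
    and a :: "'a list"
    and B :: "nat \<Rightarrow> (nat \<Rightarrow> real) set"
    and ylo yhi :: real
  assumes P: "prob_space M"
    and T: "1 \<le> T"
    and t: "1 \<le> t" "t \<le> T"
    and Act_fin: "\<And>s. 1 \<le> s \<Longrightarrow> s \<le> T \<Longrightarrow> finite (Act s)"
    and A_meas: "\<And>s. 1 \<le> s \<Longrightarrow> s \<le> T \<Longrightarrow> A s \<in> M \<rightarrow>\<^sub>M count_space (Act s)"
    and X_meas: "\<And>s as. s \<le> T \<Longrightarrow> length as = s \<Longrightarrow> (\<forall>i<s. as ! i \<in> Act (Suc i)) \<Longrightarrow>
                   X s as \<in> M \<rightarrow>\<^sub>M PiM {..<d s} (\<lambda>_. borel)"
    and Y_meas: "\<And>as. 1 \<le> length as \<Longrightarrow> length as \<le> T \<Longrightarrow> (\<forall>i<length as. as ! i \<in> Act (Suc i)) \<Longrightarrow>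
                   Y as \<in> borel_measurable M"
    and a_len: "length a = t"
    and a_act: "\<forall>i<t. a ! i \<in> Act (Suc i)"
    and B_meas: "\<And>s. s \<le> t \<Longrightarrow> B s \<in> sets (PiM {..<d s} (\<lambda>_. borel))"
    and B_pos: "measure M (fixed_event M X a B) > 0"
    and y_order: "ylo < yhi"
    and Y_bound: "AE \<omega> in M. ylo \<le> Y a \<omega> \<and> Y a \<omega> \<le> yhi"
    and hyp: "cprob M {\<omega> \<in> space M. act_hist A t \<omega> = a} (hist_event M X A a B)
              > measure M {\<omega> \<in> space M. act_hist A t \<omega> = a}"
  shows "(\<integral>\<omega>. clipped_Y Y A a yhi \<omega> \<partial>M) - (\<integral>\<omega>. clipped_Y Y A a ylo \<omega> \<partial>M)
         > cexp M (clipped_Y Y A a yhi) (hist_event M X A a B)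
           - cexp M (clipped_Y Y A a ylo) (hist_event M X A a B)"
proof -
  interpret prob_space M by (rule P)
  define F where "F = {\<omega> \<in> space M. act_hist A t \<omega> = a}"
  define E where "E = hist_event M X A a B"
  define g where "g = (\<lambda>c \<omega>. if act_hist A t \<omega> = a then Y a \<omega> else (c::real))"
  have ah: "act_hist A t \<omega> = a \<longleftrightarrow> (\<forall>i<t. A (Suc i) \<omega> = a ! i)" for \<omega>
    unfolding act_hist_def using a_len
    by (auto simp: list_eq_iff_nth_eq nth_upt simp del: upt_Suc)
  have Fi: "F = space M \<inter> (\<Inter>i\<in>{..<t}. A (Suc i) -` {a ! i} \<inter> space M)"
    unfolding F_def using ah t by auto
  have Si: "A (Suc i) -` {a ! i} \<inter> space M \<in> sets M" if "i < t" for i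
  proof -
    have "A (Suc i) \<in> M \<rightarrow>\<^sub>M count_space (Act (Suc i))" using A_meas that t by auto
    moreover have "{a ! i} \<in> sets (count_space (Act (Suc i)))" using a_act that by auto
    ultimately show ?thesis by (rule measurable_sets)
  qed
  have Fm: "F \<in> sets M"
  proof (cases "t = 0")
    case True then show ?thesis using Fi by simp
  next
    case False
    then have "(\<Inter>i\<in>{..<t}. A (Suc i) -` {a ! i} \<inter> space M) \<in> sets M"
      using Si by (intro sets.finite_INT) auto
    then show ?thesis using Fi by (simp add: Int_absorb1 sets.sets_into_space)
  qed
  have cl: "clipped_Y Y A a c = g c" for c
    unfolding clipped_Y_def g_def using a_len by (auto intro!: ext)
  have Ya: "Y a \<in> borel_measurable M" using Y_meas a_len a_act t by auto
  have gm: "g c \<in> borel_measurable M" for c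
  proof -
    have "(\<lambda>\<omega>. if act_hist A t \<omega> = a then Y a \<omega> else c) \<in> borel_measurable M"
      by (rule measurable_If) (use Ya Fm in \<open>auto simp: F_def\<close>)
    then show ?thesis unfolding g_def .
  qed
  have gi: "integrable M (g c)" for c
  proof (rule integrable_const_bound[where B="\<bar>ylo\<bar> + \<bar>yhi\<bar> + \<bar>c\<bar>"])
    show "AE x in M. norm (g c x) \<le> \<bar>ylo\<bar> + \<bar>yhi\<bar> + \<bar>c\<bar>"
      using Y_bound by eventually_elim (auto simp: g_def)
  qed (rule gm)
  have diff: "g yhi \<omega> - g ylo \<omega> = (yhi - ylo) * (1 - indicator F \<omega>)" if "\<omega> \<in> space M" for \<omega>
    using that by (simp add: g_def indicator_def F_def)
  have Epos: "measure M E > 0"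
  proof (rule ccontr)
    assume "\<not> ?thesis"
    then have "measure M E = 0" using measure_nonneg[of M E] by linarith
    then show False using hyp measure_nonneg[of M F] unfolding E_def F_def cprob_def by simp
  qed
  have Em: "E \<in> sets M" using Epos measure_notin_sets by fastforce
  have L: "(\<integral>\<omega>. g yhi \<omega> \<partial>M) - (\<integral>\<omega>. g ylo \<omega> \<partial>M) = (yhi - ylo) * (1 - measure M F)"
  proof -
    have "(\<integral>\<omega>. g yhi \<omega> \<partial>M) - (\<integral>\<omega>. g ylo \<omega> \<partial>M) = (\<integral>\<omega>. g yhi \<omega> - g ylo \<omega> \<partial>M)"
      using gi by (simp add: Bochner_Integration.integral_diff)
    also have "\<dots> = (\<integral>\<omega>. (yhi - ylo) * (1 - indicator F \<omega>) \<partial>M)" by (rule Bochner_Integration.integral_cong) (simp_all add: diff)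
    also have "\<dots> = (yhi - ylo) * (1 - measure M F)"
    proof -
      have "(\<integral>\<omega>. 1 - indicator F \<omega> \<partial>M) = 1 - measure M F"
        using Fm by (subst Bochner_Integration.integral_diff) (auto simp: prob_space integrable_indicator_iff less_top[symmetric])
      then show ?thesis by simp
    qed
    finally show ?thesis .
  qed
  have R: "(\<integral>\<omega>. indicator E \<omega> * g yhi \<omega> \<partial>M) - (\<integral>\<omega>. indicator E \<omega> * g ylo \<omega> \<partial>M)
      = (yhi - ylo) * (measure M E - measure M (F \<inter> E))"
  proof -
    have ii: "integrable M (\<lambda>\<omega>. indicator E \<omega> * g c \<omega>)" for c
      using integrable_real_mult_indicator[OF Em gi[of c]] by (simp add: mult.commute)
    have "(\<integral>\<omega>. indicator E \<omega> * g yhi \<omega> \<partial>M) - (\<integral>\<omega>. indicator E \<omega> * g ylo \<omega> \<partial>M)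
        = (\<integral>\<omega>. indicator E \<omega> * g yhi \<omega> - indicator E \<omega> * g ylo \<omega> \<partial>M)"
      using ii by (simp add: Bochner_Integration.integral_diff)
    also have "\<dots> = (\<integral>\<omega>. (yhi - ylo) * (indicator E \<omega> - indicator (F \<inter> E) \<omega>) \<partial>M)"
      by (rule Bochner_Integration.integral_cong)
         (auto simp: g_def indicator_def algebra_simps F_def)
    also have "\<dots> = (yhi - ylo) * (measure M E - measure M (F \<inter> E))"
    proof -
      have "(\<integral>\<omega>. indicator E \<omega> - indicator (F \<inter> E) \<omega> \<partial>M) = measure M E - measure M (F \<inter> E)"
        using Fm Em by (subst Bochner_Integration.integral_diff)
          (auto simp: integrable_indicator_iff less_top[symmetric])
      then show ?thesis by simp
    qed
    finally show ?thesis .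
  qed
  have "measure M F < measure M (F \<inter> E) / measure M E"
    using hyp unfolding cprob_def F_def E_def by simp
  then have c1: "(measure M E - measure M (F \<inter> E)) / measure M E < 1 - measure M F"
    using Epos by (simp add: diff_divide_distrib)
  have "cexp M (g yhi) E - cexp M (g ylo) E = (yhi - ylo) * ((measure M E - measure M (F \<inter> E)) / measure M E)"
    unfolding cexp_def using R by (simp add: diff_divide_distrib[symmetric])
  also have "\<dots> < (yhi - ylo) * (1 - measure M F)"
    using mult_strict_left_mono[OF c1, of "yhi - ylo"] y_order by (simp del: times_divide_eq_right)
  finally show ?thesis unfolding cl E_def[symmetric] using L by simp
qed

end
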